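(* Let $(G,\cdot)$ be a group and let $\psi\in\operatorname{End}(G,\cdot)$. Consider the subset $$N=\{\,\nu(g):g\in G\,\},\qquad \nu(g)\colon h\mapsto g\cdot\psi(g)\cdot h\cdot\psi(g)^{-1},$$ of $\operatorname{Perm}(G)$, and define $g\circ h=g\cdot\psi(g)\cdot h\cdot\psi(g)^{-1}$ for $g,h\in G$. (1) The following are equivalent: (a) $N$ is a subgroup of $\operatorname{Perm}(G)$; (b) $N$ is a regular subgroup of $\operatorname{Perm}(G)$ which normalises $\lambda(G)$; (c) $\psi([\psi(G),G])\le Z(G,\cdot)$; (d) $(G,\cdot,\circ)$ is a skew brace. (2) The following are equivalent: (a) $N$ is a regular subgroup of $\operatorname{Perm}(G)$ which normalises, and is normalised by, $\lambda(G)$; (b) $\psi([G,G])\le Z(G,\cdot)$; (c) $(G,\cdot,\circ)$ is a bi-skew brace.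
   Context: $\operatorname{Perm}(G)$ denotes the group of all permutations of the underlying set of $G$, and $\lambda\colon G\to\operatorname{Perm}(G)$, $\lambda(g)(h)=g\cdot h$, is the left regular representation. A subset $N\subseteq\operatorname{Perm}(G)$ is regular if the map $N\to G$, $\eta\mapsto\eta(1)$, is a bijection. "$N$ normalises $\lambda(G)$" means $\eta\lambda(G)\eta^{-1}=\lambda(G)$ for all $\eta\in N$; "$N$ is normalised by $\lambda(G)$" means $\lambda(g)N\lambda(g)^{-1}=N$ for all $g\in G$. Commutators are $[x,y]=xyx^{-1}y^{-1}$, and for subgroups $A,B$, $[A,B]$ is the subgroup generated by all $[a,b]$, $a\in A,b\in B$; $\psi(G)$ is the image of $\psi$. $Z(G,\cdot)$ is the centre. A skew (left) brace is a triple $(G,\cdot,\circ)$ where $(G,\cdot)$ and $(G,\circ)$ are groups and $g\circ(h\cdot k)=(g\circ h)\cdot g^{-1}\cdot(g\circ k)$ for all $g,h,k$ (with $g^{-1}$ the inverse in $(G,\cdot)$). A bi-skew brace is a triple $(G,\cdot,\circ)$ such that both $(G,\cdot,\circ)$ and $(G,\circ,\cdot)$ are skew braces. *)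

theory Defs
  imports "HOL-Algebra.Algebra"
begin

definition centre :: "('a, 'b) monoid_scheme \<Rightarrow> 'a set" where
  "centre G = {z \<in> carrier G. \<forall>x \<in> carrier G. z \<otimes>\<^bsub>G\<^esub> x = x \<otimes>\<^bsub>G\<^esub> z}"

definition commutator_subgroup :: "('a, 'b) monoid_scheme \<Rightarrow> 'a set \<Rightarrow> 'a set \<Rightarrow> 'a set" where
  "commutator_subgroup G A B = generate G
     (\<Union>a \<in> A. \<Union>b \<in> B. {a \<otimes>\<^bsub>G\<^esub> b \<otimes>\<^bsub>G\<^esub> inv\<^bsub>G\<^esub> a \<otimes>\<^bsub>G\<^esub> inv\<^bsub>G\<^esub> b})"

definition lreg :: "('a, 'b) monoid_scheme \<Rightarrow> 'a \<Rightarrow> ('a \<Rightarrow> 'a)" where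
  "lreg G g = (\<lambda>h \<in> carrier G. g \<otimes>\<^bsub>G\<^esub> h)"

definition regular_perm :: "('a, 'b) monoid_scheme \<Rightarrow> ('a \<Rightarrow> 'a) set \<Rightarrow> bool" where
  "regular_perm G N \<longleftrightarrow> bij_betw (\<lambda>\<eta>. \<eta> \<one>\<^bsub>G\<^esub>) N (carrier G)"

definition normalises_lreg :: "('a, 'b) monoid_scheme \<Rightarrow> ('a \<Rightarrow> 'a) set \<Rightarrow> bool" where
  "normalises_lreg G N \<longleftrightarrow>
     (\<forall>\<eta> \<in> N. (\<lambda>g. \<eta> \<otimes>\<^bsub>BijGroup (carrier G)\<^esub> lreg G g
                  \<otimes>\<^bsub>BijGroup (carrier G)\<^esub> inv\<^bsub>BijGroup (carrier G)\<^esub> \<eta>) ` carrier G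
              = lreg G ` carrier G)"

definition normalised_by_lreg :: "('a, 'b) monoid_scheme \<Rightarrow> ('a \<Rightarrow> 'a) set \<Rightarrow> bool" where
  "normalised_by_lreg G N \<longleftrightarrow>
     (\<forall>g \<in> carrier G. (\<lambda>\<eta>. lreg G g \<otimes>\<^bsub>BijGroup (carrier G)\<^esub> \<eta>
                  \<otimes>\<^bsub>BijGroup (carrier G)\<^esub> inv\<^bsub>BijGroup (carrier G)\<^esub> lreg G g) ` N = N)"

text \<open>Skew (left) brace (A-operation = dot, B-operation = circ) on a common carrier.\<close>
definition skew_brace :: "('a, 'b) monoid_scheme \<Rightarrow> ('a, 'c) monoid_scheme \<Rightarrow> bool" where
  "skew_brace A B \<longleftrightarrow> group A \<and> group B \<and> carrier A = carrier B \<and>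
     (\<forall>g \<in> carrier A. \<forall>h \<in> carrier A. \<forall>k \<in> carrier A.
        g \<otimes>\<^bsub>B\<^esub> (h \<otimes>\<^bsub>A\<^esub> k) = (g \<otimes>\<^bsub>B\<^esub> h) \<otimes>\<^bsub>A\<^esub> inv\<^bsub>A\<^esub> g \<otimes>\<^bsub>A\<^esub> (g \<otimes>\<^bsub>B\<^esub> k))"

definition bi_skew_brace :: "('a, 'b) monoid_scheme \<Rightarrow> ('a, 'c) monoid_scheme \<Rightarrow> bool" where
  "bi_skew_brace A B \<longleftrightarrow> skew_brace A B \<and> skew_brace B A"

end

theory Submission
  imports Defs
begin


locale PP = group G for G :: "'a monoid" (structure) +
  fixes \<psi> :: "'a \<Rightarrow> 'a"
  assumes hom: "\<psi> \<in> hom G G"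
begin

lemma gh: "group_hom G G \<psi>"
  using hom by (simp add: group_hom_def group_hom_axioms_def is_group)

lemma psi_closed [simp]: "x \<in> carrier G \<Longrightarrow> \<psi> x \<in> carrier G"
  using group_hom.hom_closed[OF gh] by blast
lemma psi_mult [simp]: "x \<in> carrier G \<Longrightarrow> y \<in> carrier G \<Longrightarrow> \<psi> (x \<otimes> y) = \<psi> x \<otimes> \<psi> y"
  using group_hom.hom_mult[OF gh] by blast
lemma psi_inv [simp]: "x \<in> carrier G \<Longrightarrow> \<psi> (inv x) = inv (\<psi> x)"
  using group_hom.hom_inv[OF gh] by blast
lemma psi_one [simp]: "\<psi> \<one> = \<one>"
  using group_hom.hom_one[OF gh] by simp

lemma cancel1 [simp]: "x \<in> carrier G \<Longrightarrow> y \<in> carrier G \<Longrightarrow> inv x \<otimes> (x \<otimes> y) = y"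
  by (simp add: m_assoc[symmetric])
lemma cancel2 [simp]: "x \<in> carrier G \<Longrightarrow> y \<in> carrier G \<Longrightarrow> x \<otimes> (inv x \<otimes> y) = y"
  by (simp add: m_assoc[symmetric])

definition K where "K = {x \<in> carrier G. \<psi> x \<in> centre G}"

lemma centreD: "z \<in> centre G \<Longrightarrow> x \<in> carrier G \<Longrightarrow> z \<otimes> x = x \<otimes> z"
  unfolding centre_def by blast
lemma centre_carrier: "z \<in> centre G \<Longrightarrow> z \<in> carrier G"
  unfolding centre_def by blast
lemma centreI: "z \<in> carrier G \<Longrightarrow> (\<And>x. x \<in> carrier G \<Longrightarrow> z \<otimes> x = x \<otimes> z) \<Longrightarrow> z \<in> centre G"
  unfolding centre_def by blast

lemma centre_subgroup: "subgroup (centre G) G"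
proof (rule subgroupI)
  show "centre G \<subseteq> carrier G" using centre_carrier by blast
  have "\<one> \<in> centre G" by (rule centreI) simp_all
  thus "centre G \<noteq> {}" by blast
next
  fix a assume a: "a \<in> centre G"
  hence ac: "a \<in> carrier G" by (rule centre_carrier)
  show "inv a \<in> centre G"
  proof (rule centreI)
    fix x assume x: "x \<in> carrier G"
    have "a \<otimes> x = x \<otimes> a" using a x by (rule centreD)
    hence "inv a \<otimes> (a \<otimes> x) \<otimes> inv a = inv a \<otimes> (x \<otimes> a) \<otimes> inv a" by simp
    thus "inv a \<otimes> x = x \<otimes> inv a" using ac x by (simp add: m_assoc)
  qed (use ac in simp)
next
  fix a b assume a: "a \<in> centre G" and b: "b \<in> centre G"
  have ac: "a \<in> carrier G" and bc: "b \<in> carrier G" using a b by (simp_all add: centre_carrier)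
  show "a \<otimes> b \<in> centre G"
  proof (rule centreI)
    fix x assume x: "x \<in> carrier G"
    have "a \<otimes> b \<otimes> x = a \<otimes> (b \<otimes> x)" using ac bc x by (simp add: m_assoc)
    also have "\<dots> = a \<otimes> (x \<otimes> b)" using centreD[OF b x] by simp
    also have "\<dots> = (a \<otimes> x) \<otimes> b" using ac bc x by (simp add: m_assoc)
    also have "\<dots> = (x \<otimes> a) \<otimes> b" using centreD[OF a x] by simp
    also have "\<dots> = x \<otimes> (a \<otimes> b)" using ac bc x by (simp add: m_assoc)
    finally show "a \<otimes> b \<otimes> x = x \<otimes> (a \<otimes> b)" .
  qed (use ac bc in simp)
qed

lemma centre_conj: "z \<in> centre G \<Longrightarrow> x \<in> carrier G \<Longrightarrow> x \<otimes> z \<otimes> inv x = z"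
proof -
  assume a: "z \<in> centre G" "x \<in> carrier G"
  hence zc: "z \<in> carrier G" by (simp add: centre_carrier)
  have "x \<otimes> z = z \<otimes> x" using centreD[OF a] by simp
  hence "x \<otimes> z \<otimes> inv x = z \<otimes> x \<otimes> inv x" by simp
  also have "\<dots> = z" using a zc by (simp add: m_assoc)
  finally show ?thesis .
qed

lemma K_subgroup: "subgroup K G"
proof (rule subgroupI)
  show "K \<subseteq> carrier G" by (auto simp: K_def)
  show "K \<noteq> {}" using subgroup.one_closed[OF centre_subgroup] by (auto simp: K_def intro!: exI[of _ \<one>])
  fix a b assume "a \<in> K" "b \<in> K"
  thus "a \<otimes> b \<in> K" using subgroup.m_closed[OF centre_subgroup] by (auto simp: K_def)
next
  fix a assume "a \<in> K"
  thus "inv a \<in> K" using subgroup.m_inv_closed[OF centre_subgroup] by (auto simp: K_def)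
qed

lemma K_conj: "z \<in> K \<Longrightarrow> x \<in> carrier G \<Longrightarrow> x \<otimes> z \<otimes> inv x \<in> K"
  by (auto simp: K_def centre_conj)

lemma K_conj_iff: "z \<in> carrier G \<Longrightarrow> x \<in> carrier G \<Longrightarrow> x \<otimes> z \<otimes> inv x \<in> K \<longleftrightarrow> z \<in> K"
proof
  assume "x \<otimes> z \<otimes> inv x \<in> K" "z \<in> carrier G" "x \<in> carrier G"
  from K_conj[OF this(1) inv_closed[OF this(3)]] this show "z \<in> K"
    by (simp add: m_assoc)
qed (simp add: K_conj)

lemma K_inv_iff: "z \<in> carrier G \<Longrightarrow> inv z \<in> K \<longleftrightarrow> z \<in> K"
  using subgroup.m_inv_closed[OF K_subgroup] by (metis inv_inv)

lemma gen_K: "S \<subseteq> carrier G \<Longrightarrow> (\<psi> ` generate G S \<subseteq> centre G) \<longleftrightarrow> S \<subseteq> K"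
proof
  assume "S \<subseteq> carrier G" "\<psi> ` generate G S \<subseteq> centre G"
  thus "S \<subseteq> K" by (auto simp: K_def intro: generate.incl)
next
  assume "S \<subseteq> carrier G" "S \<subseteq> K"
  hence "generate G S \<subseteq> K" by (rule_tac generate_subgroup_incl[OF _ K_subgroup]) simp
  thus "\<psi> ` generate G S \<subseteq> centre G" by (auto simp: K_def)
qed

lemma conj_eq_pt: assumes c: "a \<in> carrier G" "b \<in> carrier G" "h \<in> carrier G" shows "
  (a \<otimes> h \<otimes> inv a = b \<otimes> h \<otimes> inv b) \<longleftrightarrow> (inv b \<otimes> a) \<otimes> h = h \<otimes> (inv b \<otimes> a)"
proof -
  { assume e: "a \<otimes> h \<otimes> inv a = b \<otimes> h \<otimes> inv b"
    have "inv b \<otimes> a \<otimes> h = inv b \<otimes> (a \<otimes> h \<otimes> inv a) \<otimes> a" using c by (simp add: m_assoc)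
    also have "\<dots> = inv b \<otimes> (b \<otimes> h \<otimes> inv b) \<otimes> a" by (simp only: e)
    also have "\<dots> = h \<otimes> (inv b \<otimes> a)" using c by (simp add: m_assoc)
    finally have "inv b \<otimes> a \<otimes> h = h \<otimes> (inv b \<otimes> a)" . }
  moreover
  { assume e: "inv b \<otimes> a \<otimes> h = h \<otimes> (inv b \<otimes> a)"
    have "a \<otimes> h \<otimes> inv a = b \<otimes> (inv b \<otimes> a \<otimes> h) \<otimes> inv a" using c by (simp add: m_assoc)
    also have "\<dots> = b \<otimes> (h \<otimes> (inv b \<otimes> a)) \<otimes> inv a" by (simp only: e)
    also have "\<dots> = b \<otimes> h \<otimes> inv b" using c by (simp add: m_assoc)
    finally have "a \<otimes> h \<otimes> inv a = b \<otimes> h \<otimes> inv b" . }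
  ultimately show ?thesis by blast
qed

lemma conj_eq: "a \<in> carrier G \<Longrightarrow> b \<in> carrier G \<Longrightarrow>
  (\<forall>h \<in> carrier G. a \<otimes> h \<otimes> inv a = b \<otimes> h \<otimes> inv b) \<longleftrightarrow> inv b \<otimes> a \<in> centre G"
  by (auto simp: conj_eq_pt intro: centreI dest: centreD)

end



lemma BG_mult: "f1 \<in> Bij S \<Longrightarrow> f2 \<in> Bij S \<Longrightarrow> f1 \<otimes>\<^bsub>BijGroup S\<^esub> f2 = (\<lambda>x\<in>S. f1 (f2 x))"
  by (simp add: BijGroup_def compose_def)
lemma BG_one: "\<one>\<^bsub>BijGroup S\<^esub> = (\<lambda>x\<in>S. x)"
  by (simp add: BijGroup_def)
lemma BG_carrier: "carrier (BijGroup S) = Bij S"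
  by (simp add: BijGroup_def)

lemma restrict_eq_iff: "((\<lambda>x\<in>A. f x) = (\<lambda>x\<in>A. g x)) \<longleftrightarrow> (\<forall>x\<in>A. f x = g x)"
  by (auto simp: fun_eq_iff restrict_def)

context PP begin

definition crc where "crc g h = g \<otimes> \<psi> g \<otimes> h \<otimes> inv (\<psi> g)"
definition nuu where "nuu g = (\<lambda>h\<in>carrier G. crc g h)"
abbreviation BG where "BG \<equiv> BijGroup (carrier G)"

lemma crc_closed [simp]: "g \<in> carrier G \<Longrightarrow> h \<in> carrier G \<Longrightarrow> crc g h \<in> carrier G"
  by (simp add: crc_def)

lemma nuu_app [simp]: "h \<in> carrier G \<Longrightarrow> nuu g h = crc g h"
  by (simp add: nuu_def)

lemma nuu_one: "g \<in> carrier G \<Longrightarrow> nuu g \<one> = g"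
  by (simp add: crc_def m_assoc)

lemma nuu_Bij: assumes g: "g \<in> carrier G" shows "nuu g \<in> Bij (carrier G)"
proof -
  have "bij_betw (nuu g) (carrier G) (carrier G)"
  proof (rule bij_betwI[where g="\<lambda>y. inv (\<psi> g) \<otimes> inv g \<otimes> y \<otimes> \<psi> g"])
    show "nuu g \<in> carrier G \<rightarrow> carrier G" using g by auto
    show "(\<lambda>y. inv (\<psi> g) \<otimes> inv g \<otimes> y \<otimes> \<psi> g) \<in> carrier G \<rightarrow> carrier G" using g by auto
    fix x assume "x \<in> carrier G"
    thus "inv (\<psi> g) \<otimes> inv g \<otimes> nuu g x \<otimes> \<psi> g = x" using g by (simp add: crc_def m_assoc)
  next
    fix y assume "y \<in> carrier G"
    thus "nuu g (inv (\<psi> g) \<otimes> inv g \<otimes> y \<otimes> \<psi> g) = y" using g by (simp add: crc_def m_assoc)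
  qed
  thus ?thesis by (simp add: Bij_def nuu_def)
qed

lemma nuu_carrier: "g \<in> carrier G \<Longrightarrow> nuu g \<in> carrier BG"
  by (simp add: BG_carrier nuu_Bij)

lemma nuu_mult: "g \<in> carrier G \<Longrightarrow> k \<in> carrier G \<Longrightarrow>
   nuu g \<otimes>\<^bsub>BG\<^esub> nuu k = (\<lambda>h\<in>carrier G. crc g (crc k h))"
  by (simp add: BG_mult nuu_Bij restrict_eq_iff)

lemma nuu_eq_iff: "g \<in> carrier G \<Longrightarrow> k \<in> carrier G \<Longrightarrow> nuu g = nuu k \<longleftrightarrow> g = k"
  by (metis nuu_one)

lemma nuu_1: "nuu \<one> = \<one>\<^bsub>BG\<^esub>"
  by (simp add: nuu_def BG_one crc_def restrict_eq_iff)

lemma comp_eq: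
  assumes g: "g \<in> carrier G" and k: "k \<in> carrier G"
  shows "(nuu g \<otimes>\<^bsub>BG\<^esub> nuu k = nuu (crc g k)) \<longleftrightarrow> \<psi> g \<otimes> inv k \<otimes> inv (\<psi> g) \<otimes> k \<in> K"
proof -
  define m where "m = crc g k"
  define a where "a = \<psi> g \<otimes> \<psi> k"
  define b where "b = \<psi> m"
  have mc: "m \<in> carrier G" and ac: "a \<in> carrier G" and bc: "b \<in> carrier G"
    using g k by (simp_all add: m_def a_def b_def)
  have e1: "crc g (crc k h) = m \<otimes> (a \<otimes> h \<otimes> inv a)" if h: "h \<in> carrier G" for h
    using g k h by (simp add: m_def a_def crc_def m_assoc inv_mult_group)
  have e2: "crc m h = m \<otimes> (b \<otimes> h \<otimes> inv b)" if h: "h \<in> carrier G" for h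
    using mc bc h by (simp add: b_def crc_def m_assoc)
  have "(nuu g \<otimes>\<^bsub>BG\<^esub> nuu k = nuu m) \<longleftrightarrow> (\<forall>h\<in>carrier G. crc g (crc k h) = crc m h)"
    by (subst nuu_mult[OF g k]) (simp add: nuu_def restrict_eq_iff)
  also have "\<dots> \<longleftrightarrow> (\<forall>h\<in>carrier G. a \<otimes> h \<otimes> inv a = b \<otimes> h \<otimes> inv b)"
    using e1 e2 mc ac bc by simp
  also have "\<dots> \<longleftrightarrow> inv b \<otimes> a \<in> centre G" using ac bc by (rule conj_eq)
  also have "inv b \<otimes> a = \<psi> (\<psi> g \<otimes> inv k \<otimes> inv (\<psi> g) \<otimes> k)"
    using g k by (simp add: b_def a_def m_def crc_def m_assoc inv_mult_group)
  finally show ?thesis using g k by (simp add: m_def K_def)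
qed

end


context PP begin

definition Nset where "Nset = nuu ` carrier G"
definition C1 where "C1 \<longleftrightarrow> (\<forall>g\<in>carrier G. \<forall>k\<in>carrier G. \<psi> g \<otimes> k \<otimes> inv (\<psi> g) \<otimes> inv k \<in> K)"
definition C2 where "C2 \<longleftrightarrow> (\<forall>g\<in>carrier G. \<forall>k\<in>carrier G. g \<otimes> k \<otimes> inv g \<otimes> inv k \<in> K)"

lemma BGg: "group BG" by (rule group_BijGroup)

lemma C1_comp: "C1 \<Longrightarrow> g \<in> carrier G \<Longrightarrow> k \<in> carrier G \<Longrightarrow> nuu g \<otimes>\<^bsub>BG\<^esub> nuu k = nuu (crc g k)"
proof -
  assume c: C1 and g: "g \<in> carrier G" and k: "k \<in> carrier G"
  have "\<psi> g \<otimes> inv k \<otimes> inv (\<psi> g) \<otimes> inv (inv k) \<in> K"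
    using c g k unfolding C1_def by blast
  thus ?thesis using comp_eq[OF g k] k by simp
qed

lemma comp_C1: assumes "\<And>g k. g \<in> carrier G \<Longrightarrow> k \<in> carrier G \<Longrightarrow> nuu g \<otimes>\<^bsub>BG\<^esub> nuu k = nuu (crc g k)"
  shows C1
  unfolding C1_def
proof (intro ballI)
  fix g k assume g: "g \<in> carrier G" and k: "k \<in> carrier G"
  have "\<psi> g \<otimes> inv (inv k) \<otimes> inv (\<psi> g) \<otimes> inv k \<in> K"
    using comp_eq[OF g inv_closed[OF k]] assms[OF g inv_closed[OF k]] by simp
  thus "\<psi> g \<otimes> k \<otimes> inv (\<psi> g) \<otimes> inv k \<in> K" using k by simp
qed

lemma crc_inv_witness: "g \<in> carrier G \<Longrightarrow> crc g (inv (\<psi> g) \<otimes> inv g \<otimes> \<psi> g) = \<one>"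
  by (simp add: crc_def m_assoc)

lemma mult_eval: "g \<in> carrier G \<Longrightarrow> k \<in> carrier G \<Longrightarrow> (nuu g \<otimes>\<^bsub>BG\<^esub> nuu k) \<one> = crc g k"
  by (simp add: nuu_mult crc_def m_assoc)

lemma sub_iff: "subgroup Nset BG \<longleftrightarrow> C1"
proof
  assume sg: "subgroup Nset BG"
  show C1
  proof (rule comp_C1)
    fix g k assume g: "g \<in> carrier G" and k: "k \<in> carrier G"
    have "nuu g \<otimes>\<^bsub>BG\<^esub> nuu k \<in> Nset"
      using subgroup.m_closed[OF sg] g k by (simp add: Nset_def)
    then obtain m where m: "m \<in> carrier G" "nuu g \<otimes>\<^bsub>BG\<^esub> nuu k = nuu m" by (auto simp: Nset_def)
    hence "m = crc g k" using mult_eval[OF g k] nuu_one[OF m(1)] by simp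
    thus "nuu g \<otimes>\<^bsub>BG\<^esub> nuu k = nuu (crc g k)" using m by simp
  qed
next
  assume c: C1
  show "subgroup Nset BG"
  proof (rule group.subgroupI[OF BGg])
    show "Nset \<subseteq> carrier BG" by (auto simp: Nset_def nuu_carrier)
    show "Nset \<noteq> {}" by (auto simp: Nset_def)
  next
    fix a b assume "a \<in> Nset" "b \<in> Nset"
    thus "a \<otimes>\<^bsub>BG\<^esub> b \<in> Nset" by (auto simp: Nset_def C1_comp[OF c])
  next
    fix a assume "a \<in> Nset"
    then obtain g where g: "g \<in> carrier G" "a = nuu g" by (auto simp: Nset_def)
    define k where "k = inv (\<psi> g) \<otimes> inv g \<otimes> \<psi> g"
    have kc: "k \<in> carrier G" using g by (simp add: k_def)
    have "nuu g \<otimes>\<^bsub>BG\<^esub> nuu k = \<one>\<^bsub>BG\<^esub>"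
      using C1_comp[OF c g(1) kc] crc_inv_witness[OF g(1)] nuu_1 by (simp add: k_def)
    hence "inv\<^bsub>BG\<^esub> (nuu g) = nuu k"
      using group.inv_equality[OF BGg] group.inv_comm[OF BGg] nuu_carrier g(1) kc by metis
    thus "inv\<^bsub>BG\<^esub> a \<in> Nset" using g kc by (simp add: Nset_def)
  qed
qed

lemma C1_iff_comm: "C1 \<longleftrightarrow> \<psi> ` commutator_subgroup G (\<psi> ` carrier G) (carrier G) \<subseteq> centre G"
  unfolding commutator_subgroup_def
  by (subst gen_K) (auto simp: C1_def)

lemma C2_iff_der: "C2 \<longleftrightarrow> \<psi> ` derived G (carrier G) \<subseteq> centre G"
  unfolding derived_def
  by (subst gen_K) (auto simp: C2_def)

lemma regular: "regular_perm G Nset"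
  unfolding regular_perm_def Nset_def
proof (rule bij_betw_imageI)
  show "inj_on (\<lambda>\<eta>. \<eta> \<one>) (nuu ` carrier G)"
  proof (rule inj_onI)
    fix x y assume "x \<in> nuu ` carrier G" "y \<in> nuu ` carrier G" "x \<one> = y \<one>"
    then obtain a b where "a \<in> carrier G" "b \<in> carrier G" "x = nuu a" "y = nuu b" "nuu a \<one> = nuu b \<one>" by blast
    thus "x = y" using nuu_one by metis
  qed
  show "(\<lambda>\<eta>. \<eta> \<one>) ` nuu ` carrier G = carrier G"
    unfolding image_image using nuu_one by (simp cong: image_cong)
qed

end


context PP begin

definition RR :: "'a \<Rightarrow> 'a monoid" where "RR e = \<lparr>carrier = carrier G, monoid.mult = crc, monoid.one = e\<rparr>"

lemma RR_simps [simp]: "carrier (RR e) = carrier G" "x \<otimes>\<^bsub>RR e\<^esub> y = crc x y" "\<one>\<^bsub>RR e\<^esub> = e"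
  by (simp_all add: RR_def)

lemma crc_one_r [simp]: "g \<in> carrier G \<Longrightarrow> crc g \<one> = g"
  by (simp add: crc_def m_assoc)
lemma crc_one_l [simp]: "h \<in> carrier G \<Longrightarrow> crc \<one> h = h"
  by (simp add: crc_def)

lemma brace1: "g \<in> carrier G \<Longrightarrow> h \<in> carrier G \<Longrightarrow> k \<in> carrier G \<Longrightarrow>
  crc g (h \<otimes> k) = crc g h \<otimes> inv g \<otimes> crc g k"
  by (simp add: crc_def m_assoc)

lemma grpR_one: assumes "group (RR e)" shows "e = \<one>"
proof -
  have ec: "e \<in> carrier G" using monoid.one_closed[OF group.is_monoid[OF assms]] by simp
  have "\<one> \<otimes>\<^bsub>RR e\<^esub> e = \<one>" using monoid.r_one[OF group.is_monoid[OF assms], of \<one>] by simp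
  thus ?thesis using ec by simp
qed

lemma grpR_C1: assumes gr: "group (RR \<one>)" shows C1
proof (rule comp_C1)
  fix g k assume g: "g \<in> carrier G" and k: "k \<in> carrier G"
  have "\<forall>h\<in>carrier G. crc g (crc k h) = crc (crc g k) h"
  proof
    fix h assume h: "h \<in> carrier G"
    show "crc g (crc k h) = crc (crc g k) h"
      using monoid.m_assoc[OF group.is_monoid[OF gr], of g k h] g k h by simp
  qed
  thus "nuu g \<otimes>\<^bsub>BG\<^esub> nuu k = nuu (crc g k)"
    by (subst nuu_mult[OF g k]) (simp add: nuu_def restrict_eq_iff)
qed

lemma C1_grpR: assumes c: C1 shows "group (RR \<one>)"
proof (rule groupI)
  fix x y z assume x: "x \<in> carrier (RR \<one>)" and y: "y \<in> carrier (RR \<one>)" and z: "z \<in> carrier (RR \<one>)"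
  have "(nuu x \<otimes>\<^bsub>BG\<^esub> nuu y) z = nuu (crc x y) z" using C1_comp[OF c, of x y] x y by simp
  thus "x \<otimes>\<^bsub>RR \<one>\<^esub> y \<otimes>\<^bsub>RR \<one>\<^esub> z = x \<otimes>\<^bsub>RR \<one>\<^esub> (y \<otimes>\<^bsub>RR \<one>\<^esub> z)"
    using x y z by (simp add: nuu_mult)
next
  fix g assume g': "g \<in> carrier (RR \<one>)"
  hence g: "g \<in> carrier G" by simp
  define k where "k = inv (\<psi> g) \<otimes> inv g \<otimes> \<psi> g"
  have kc: "k \<in> carrier G" using g by (simp add: k_def)
  have "nuu g \<otimes>\<^bsub>BG\<^esub> nuu k = \<one>\<^bsub>BG\<^esub>"
    using C1_comp[OF c g kc] crc_inv_witness[OF g] nuu_1 by (simp add: k_def)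
  hence "nuu k \<otimes>\<^bsub>BG\<^esub> nuu g = \<one>\<^bsub>BG\<^esub>"
    using group.inv_comm[OF BGg] nuu_carrier g kc by metis
  hence "nuu (crc k g) = \<one>\<^bsub>BG\<^esub>" using C1_comp[OF c kc g] by simp
  hence "nuu (crc k g) \<one> = \<one>" by (simp add: BG_one)
  hence "crc k g = \<one>" using nuu_one[of "crc k g"] kc g by simp
  thus "\<exists>y\<in>carrier (RR \<one>). y \<otimes>\<^bsub>RR \<one>\<^esub> g = \<one>\<^bsub>RR \<one>\<^esub>" using kc by auto
qed auto

lemma skew_iff: "(\<exists>e. skew_brace G (RR e)) \<longleftrightarrow> C1"
proof
  assume "\<exists>e. skew_brace G (RR e)"
  then obtain e where "skew_brace G (RR e)" by blast
  hence gr: "group (RR e)" by (simp add: skew_brace_def)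
  hence "e = \<one>" by (rule grpR_one)
  thus C1 using gr grpR_C1 by simp
next
  assume C1
  hence "group (RR \<one>)" by (rule C1_grpR)
  hence "skew_brace G (RR \<one>)"
    by (simp add: skew_brace_def is_group brace1)
  thus "\<exists>e. skew_brace G (RR e)" by blast
qed

end



lemma (in group) conj_helper: "x \<in> carrier G \<Longrightarrow> y \<in> carrier G \<Longrightarrow> z \<in> carrier G \<Longrightarrow> x \<otimes> y = z \<otimes> x \<Longrightarrow> x \<otimes> y \<otimes> inv x = z"
  by (simp add: m_assoc)
lemma (in group) conj_back: "x \<in> carrier G \<Longrightarrow> n \<in> carrier G \<Longrightarrow> x \<otimes> (inv x \<otimes> n \<otimes> inv (inv x)) \<otimes> inv x = n"
  by (simp add: m_assoc, simp add: m_assoc[symmetric])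

context PP begin

definition comm where "comm x y = x \<otimes> y \<otimes> inv x \<otimes> inv y"

lemma comm_closed [simp]: "x \<in> carrier G \<Longrightarrow> y \<in> carrier G \<Longrightarrow> comm x y \<in> carrier G"
  by (simp add: comm_def)
lemma comm_mult: "g \<in> carrier G \<Longrightarrow> a \<in> carrier G \<Longrightarrow> b \<in> carrier G \<Longrightarrow>
  comm g (a \<otimes> b) = comm g a \<otimes> (a \<otimes> comm g b \<otimes> inv a)"
  by (simp add: comm_def m_assoc inv_mult_group)
lemma comm_inv: "x \<in> carrier G \<Longrightarrow> y \<in> carrier G \<Longrightarrow> inv (comm x y) = comm y x"
  by (simp add: comm_def m_assoc inv_mult_group)

lemma lreg_Bij: assumes g: "g \<in> carrier G" shows "lreg G g \<in> Bij (carrier G)"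
proof -
  have "bij_betw (lreg G g) (carrier G) (carrier G)"
  proof (rule bij_betwI[where g="\<lambda>y. inv g \<otimes> y"])
    show "lreg G g \<in> carrier G \<rightarrow> carrier G" using g by (auto simp: lreg_def)
    show "(\<lambda>y. inv g \<otimes> y) \<in> carrier G \<rightarrow> carrier G" using g by auto
  qed (use g in \<open>auto simp: lreg_def\<close>)
  thus ?thesis by (simp add: Bij_def lreg_def)
qed

lemma lreg_carrier: "g \<in> carrier G \<Longrightarrow> lreg G g \<in> carrier BG"
  by (simp add: BG_carrier lreg_Bij)

lemma lreg_app [simp]: "h \<in> carrier G \<Longrightarrow> lreg G g h = g \<otimes> h"
  by (simp add: lreg_def)

lemma lreg_inv: assumes g: "g \<in> carrier G" shows "inv\<^bsub>BG\<^esub> (lreg G g) = lreg G (inv g)"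
proof (rule group.inv_equality[OF BGg])
  show "lreg G (inv g) \<otimes>\<^bsub>BG\<^esub> lreg G g = \<one>\<^bsub>BG\<^esub>"
    using g by (simp add: BG_mult lreg_Bij BG_one restrict_eq_iff m_assoc[symmetric])
qed (use g in \<open>simp_all add: lreg_carrier\<close>)

lemma normalises: "normalises_lreg G Nset"
  unfolding normalises_lreg_def Nset_def
proof (intro ballI, elim imageE)
  fix \<eta> k assume e: "\<eta> = nuu k" and k: "k \<in> carrier G"
  define w where "w = k \<otimes> \<psi> k"
  have wc: "w \<in> carrier G" using k by (simp add: w_def)
  have eq: "nuu k \<otimes>\<^bsub>BG\<^esub> lreg G g \<otimes>\<^bsub>BG\<^esub> inv\<^bsub>BG\<^esub> nuu k = lreg G (w \<otimes> g \<otimes> inv w)"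
    if g: "g \<in> carrier G" for g
  proof (rule group.conj_helper[OF BGg])
    show "nuu k \<otimes>\<^bsub>BG\<^esub> lreg G g = lreg G (w \<otimes> g \<otimes> inv w) \<otimes>\<^bsub>BG\<^esub> nuu k"
      using g k wc by (simp add: BG_mult lreg_Bij nuu_Bij restrict_eq_iff crc_def w_def m_assoc inv_mult_group)
  qed (use g k wc in \<open>simp_all add: lreg_carrier nuu_carrier\<close>)
  show "(\<lambda>g. \<eta> \<otimes>\<^bsub>BG\<^esub> lreg G g \<otimes>\<^bsub>BG\<^esub> inv\<^bsub>BG\<^esub> \<eta>) ` carrier G = lreg G ` carrier G"
  proof
    show "(\<lambda>g. \<eta> \<otimes>\<^bsub>BG\<^esub> lreg G g \<otimes>\<^bsub>BG\<^esub> inv\<^bsub>BG\<^esub> \<eta>) ` carrier G \<subseteq> lreg G ` carrier G"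
      using eq wc by (auto simp: e)
  next
    show "lreg G ` carrier G \<subseteq> (\<lambda>g. \<eta> \<otimes>\<^bsub>BG\<^esub> lreg G g \<otimes>\<^bsub>BG\<^esub> inv\<^bsub>BG\<^esub> \<eta>) ` carrier G"
    proof
      fix x assume "x \<in> lreg G ` carrier G"
      then obtain g where g: "g \<in> carrier G" "x = lreg G g" by blast
      have "x = lreg G (w \<otimes> (inv w \<otimes> g \<otimes> w) \<otimes> inv w)" using g wc by (simp add: m_assoc)
      also have "\<dots> = \<eta> \<otimes>\<^bsub>BG\<^esub> lreg G (inv w \<otimes> g \<otimes> w) \<otimes>\<^bsub>BG\<^esub> inv\<^bsub>BG\<^esub> \<eta>"
        using eq[of "inv w \<otimes> g \<otimes> w"] g wc by (simp add: e)
      finally show "x \<in> (\<lambda>g. \<eta> \<otimes>\<^bsub>BG\<^esub> lreg G g \<otimes>\<^bsub>BG\<^esub> inv\<^bsub>BG\<^esub> \<eta>) ` carrier G"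
        using g wc by blast
    qed
  qed
qed

end


context PP begin

lemma inNset_iff: assumes f: "f \<in> extensional (carrier G)" "f \<one> \<in> carrier G"
  shows "f \<in> Nset \<longleftrightarrow> f = nuu (f \<one>)"
proof
  assume "f \<in> Nset"
  then obtain m where m: "m \<in> carrier G" "f = nuu m" by (auto simp: Nset_def)
  thus "f = nuu (f \<one>)" using nuu_one[OF m(1)] by simp
next
  assume "f = nuu (f \<one>)"
  thus "f \<in> Nset" using f(2) unfolding Nset_def by (metis image_eqI)
qed

lemma conjN: assumes g: "g \<in> carrier G" and k: "k \<in> carrier G"
  shows "lreg G g \<otimes>\<^bsub>BG\<^esub> nuu k \<otimes>\<^bsub>BG\<^esub> inv\<^bsub>BG\<^esub> (lreg G g) \<in> Nset
     \<longleftrightarrow> comm g (inv (\<psi> k) \<otimes> inv k) \<in> K"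
proof -
  define f where "f = (\<lambda>h\<in>carrier G. g \<otimes> crc k (inv g \<otimes> h))"
  have fe: "lreg G g \<otimes>\<^bsub>BG\<^esub> nuu k \<otimes>\<^bsub>BG\<^esub> inv\<^bsub>BG\<^esub> (lreg G g) = f"
    using g k by (simp add: lreg_inv BG_mult lreg_Bij nuu_Bij compose_Bij[unfolded compose_def]
      f_def restrict_eq_iff)
  define m where "m = f \<one>"
  have mc: "m \<in> carrier G" using g k by (simp add: m_def f_def)
  have "f \<in> Nset \<longleftrightarrow> f = nuu m" unfolding m_def
    by (rule inNset_iff) (use mc in \<open>simp_all add: f_def m_def\<close>)
  also have "\<dots> \<longleftrightarrow> (\<forall>h\<in>carrier G. f h = crc m h)" by (simp add: f_def nuu_def restrict_eq_iff)
  also have "\<dots> \<longleftrightarrow> (\<forall>h\<in>carrier G. \<psi> k \<otimes> h \<otimes> inv (\<psi> k) = \<psi> m \<otimes> h \<otimes> inv (\<psi> m))"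
  proof -
    have "f h = m \<otimes> (\<psi> k \<otimes> h \<otimes> inv (\<psi> k))" if h: "h \<in> carrier G" for h
      using g k h by (simp add: f_def m_def crc_def m_assoc)
    moreover have "crc m h = m \<otimes> (\<psi> m \<otimes> h \<otimes> inv (\<psi> m))" if h: "h \<in> carrier G" for h
      using mc h by (simp add: crc_def m_assoc)
    ultimately show ?thesis using mc g k by simp
  qed
  also have "\<dots> \<longleftrightarrow> inv (\<psi> m) \<otimes> \<psi> k \<in> centre G" using mc k by (simp add: conj_eq)
  also have "\<dots> \<longleftrightarrow> inv m \<otimes> k \<in> K" using mc k by (simp add: K_def)
  also have "inv m \<otimes> k = \<psi> k \<otimes> comm g (inv (\<psi> k) \<otimes> inv k) \<otimes> inv (\<psi> k)"
    using g k by (simp add: m_def f_def crc_def comm_def m_assoc inv_mult_group)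
  also have "\<dots> \<in> K \<longleftrightarrow> comm g (inv (\<psi> k) \<otimes> inv k) \<in> K"
    using g k by (simp add: K_conj_iff)
  finally show ?thesis using fe by simp
qed

lemma C2_C1: "C2 \<Longrightarrow> C1"
  unfolding C1_def C2_def by simp

lemma nb_C2: assumes c1: C1 and nb: "normalised_by_lreg G Nset" shows C2
  unfolding C2_def
proof (intro ballI)
  fix g u assume g: "g \<in> carrier G" and u: "u \<in> carrier G"
  define k where "k = inv u"
  have kc: "k \<in> carrier G" using u by (simp add: k_def)
  have "lreg G g \<otimes>\<^bsub>BG\<^esub> nuu k \<otimes>\<^bsub>BG\<^esub> inv\<^bsub>BG\<^esub> (lreg G g) \<in> Nset"
    using nb g kc unfolding normalised_by_lreg_def Nset_def by blast
  hence "comm g (inv (\<psi> k) \<otimes> inv k) \<in> K" using conjN[OF g kc] by simp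
  hence A: "comm g (\<psi> u \<otimes> u) \<in> K" using u by (simp add: k_def)
  have "comm (\<psi> u) g \<in> K" using c1 g u by (simp add: C1_def comm_def)
  hence B: "inv (comm g (\<psi> u)) \<in> K" using g u by (simp add: comm_inv)
  have "inv (comm g (\<psi> u)) \<otimes> comm g (\<psi> u \<otimes> u) \<in> K"
    using subgroup.m_closed[OF K_subgroup B A] by auto
  also have "inv (comm g (\<psi> u)) \<otimes> comm g (\<psi> u \<otimes> u) = \<psi> u \<otimes> comm g u \<otimes> inv (\<psi> u)"
    using g u by (simp add: comm_mult m_assoc[symmetric])
  finally have "\<psi> u \<otimes> comm g u \<otimes> inv (\<psi> u) \<in> K" .
  hence "comm g u \<in> K" using g u by (simp add: K_conj_iff)
  thus "g \<otimes> u \<otimes> inv g \<otimes> inv u \<in> K" by (simp add: comm_def)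
qed

lemma C2_nb: assumes c2: C2 shows "normalised_by_lreg G Nset"
  unfolding normalised_by_lreg_def
proof (intro ballI equalityI subsetI)
  fix g x assume g: "g \<in> carrier G"
  have cK: "comm a b \<in> K" if "a \<in> carrier G" "b \<in> carrier G" for a b
    using c2 that by (simp add: C2_def comm_def)
  { assume "x \<in> (\<lambda>\<eta>. lreg G g \<otimes>\<^bsub>BG\<^esub> \<eta> \<otimes>\<^bsub>BG\<^esub> inv\<^bsub>BG\<^esub> lreg G g) ` Nset"
    then obtain k where k: "k \<in> carrier G" "x = lreg G g \<otimes>\<^bsub>BG\<^esub> nuu k \<otimes>\<^bsub>BG\<^esub> inv\<^bsub>BG\<^esub> lreg G g"
      by (auto simp: Nset_def)
    thus "x \<in> Nset" using conjN[OF g k(1)] cK g by simp }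
  { assume "x \<in> Nset"
    then obtain k where k: "k \<in> carrier G" "x = nuu k" by (auto simp: Nset_def)
    define L where "L = lreg G g"
    have Lc: "L \<in> carrier BG" using g by (simp add: L_def lreg_carrier)
    have iL: "inv\<^bsub>BG\<^esub> L = lreg G (inv g)" using g by (simp add: L_def lreg_inv)
    have y: "inv\<^bsub>BG\<^esub> L \<otimes>\<^bsub>BG\<^esub> x \<otimes>\<^bsub>BG\<^esub> inv\<^bsub>BG\<^esub> (inv\<^bsub>BG\<^esub> L) \<in> Nset"
      using conjN[OF inv_closed[OF g] k(1)] cK g k by (simp add: iL)
    have "x = L \<otimes>\<^bsub>BG\<^esub> (inv\<^bsub>BG\<^esub> L \<otimes>\<^bsub>BG\<^esub> x \<otimes>\<^bsub>BG\<^esub> inv\<^bsub>BG\<^esub> (inv\<^bsub>BG\<^esub> L)) \<otimes>\<^bsub>BG\<^esub> inv\<^bsub>BG\<^esub> L"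
      using group.conj_back[OF BGg Lc, of x] k nuu_carrier by simp
    thus "x \<in> (\<lambda>\<eta>. lreg G g \<otimes>\<^bsub>BG\<^esub> \<eta> \<otimes>\<^bsub>BG\<^esub> inv\<^bsub>BG\<^esub> lreg G g) ` Nset"
      using y unfolding L_def by blast }
qed

end


context PP begin

lemma id2_pt: assumes gr: "group (RR \<one>)" and g: "g \<in> carrier G" and h: "h \<in> carrier G"
  shows "(\<forall>k\<in>carrier G. g \<otimes> crc h k = crc (crc (g \<otimes> h) (inv\<^bsub>RR \<one>\<^esub> g)) (g \<otimes> k))
         \<longleftrightarrow> comm g (inv h) \<in> K"
proof -
  interpret R: group "RR \<one>" by (rule gr)
  define gb where "gb = inv\<^bsub>RR \<one>\<^esub> g"
  have gbc: "gb \<in> carrier G" using R.inv_closed[of g] g by (simp add: gb_def)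
  have ggb: "crc g gb = \<one>" using R.r_inv[of g] g by (simp add: gb_def)
  have ass: "crc (crc x y) z = crc x (crc y z)" if "x \<in> carrier G" "y \<in> carrier G" "z \<in> carrier G" for x y z
    using R.m_assoc[of x y z] that by simp
  have y: "crc gb (g \<otimes> k) = inv (\<psi> g) \<otimes> k \<otimes> \<psi> g" if k: "k \<in> carrier G" for k
  proof -
    define y where "y = crc gb (g \<otimes> k)"
    have yc: "y \<in> carrier G" using gbc g k by (simp add: y_def)
    have "crc g y = g \<otimes> k" using ass[of g gb "g \<otimes> k"] ggb g k gbc by (simp add: y_def)
    hence "inv (\<psi> g) \<otimes> inv g \<otimes> crc g y \<otimes> \<psi> g = inv (\<psi> g) \<otimes> k \<otimes> \<psi> g" using g k by (simp add: m_assoc)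
    moreover have "inv (\<psi> g) \<otimes> inv g \<otimes> crc g y \<otimes> \<psi> g = y" using g yc by (simp add: crc_def m_assoc)
    ultimately show ?thesis by (simp add: y_def)
  qed
  define a where "a = \<psi> g \<otimes> \<psi> h \<otimes> inv (\<psi> g)"
  have ac: "a \<in> carrier G" using g h by (simp add: a_def)
  have "(\<forall>k\<in>carrier G. g \<otimes> crc h k = crc (crc (g \<otimes> h) gb) (g \<otimes> k))
      \<longleftrightarrow> (\<forall>k\<in>carrier G. \<psi> h \<otimes> k \<otimes> inv (\<psi> h) = a \<otimes> k \<otimes> inv a)"
  proof -
    have "crc (crc (g \<otimes> h) gb) (g \<otimes> k) = (g \<otimes> h) \<otimes> (a \<otimes> k \<otimes> inv a)" if k: "k \<in> carrier G" for k
    proof -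
      have "crc (crc (g \<otimes> h) gb) (g \<otimes> k) = crc (g \<otimes> h) (crc gb (g \<otimes> k))"
        using ass[of "g \<otimes> h" gb "g \<otimes> k"] g h k gbc by simp
      also have "\<dots> = (g \<otimes> h) \<otimes> (a \<otimes> k \<otimes> inv a)"
        using y[OF k] g h k by (simp add: crc_def a_def m_assoc inv_mult_group)
      finally show ?thesis .
    qed
    moreover have "g \<otimes> crc h k = (g \<otimes> h) \<otimes> (\<psi> h \<otimes> k \<otimes> inv (\<psi> h))" if k: "k \<in> carrier G" for k
      using g h k by (simp add: crc_def m_assoc)
    ultimately show ?thesis using g h ac by simp
  qed
  also have "\<dots> \<longleftrightarrow> inv a \<otimes> \<psi> h \<in> centre G" using ac h by (simp add: conj_eq)
  also have "inv a \<otimes> \<psi> h = \<psi> (comm g (inv h))" using g h by (simp add: a_def comm_def m_assoc inv_mult_group)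
  finally show ?thesis using g h by (simp add: gb_def K_def)
qed

lemma id2_iff: assumes gr: "group (RR \<one>)"
  shows "(\<forall>g\<in>carrier G. \<forall>h\<in>carrier G. \<forall>k\<in>carrier G. g \<otimes> crc h k = crc (crc (g \<otimes> h) (inv\<^bsub>RR \<one>\<^esub> g)) (g \<otimes> k))
         \<longleftrightarrow> C2"
proof
  assume A: "\<forall>g\<in>carrier G. \<forall>h\<in>carrier G. \<forall>k\<in>carrier G. g \<otimes> crc h k = crc (crc (g \<otimes> h) (inv\<^bsub>RR \<one>\<^esub> g)) (g \<otimes> k)"
  show C2 unfolding C2_def
  proof (intro ballI)
    fix g k assume g: "g \<in> carrier G" and k: "k \<in> carrier G"
    have "comm g (inv (inv k)) \<in> K" using id2_pt[OF gr g inv_closed[OF k]] A g k by simp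
    thus "g \<otimes> k \<otimes> inv g \<otimes> inv k \<in> K" using k by (simp add: comm_def)
  qed
next
  assume C2
  have "comm g (inv h) \<in> K" if "g \<in> carrier G" "h \<in> carrier G" for g h
  proof -
    have "g \<otimes> inv h \<otimes> inv g \<otimes> inv (inv h) \<in> K" using \<open>C2\<close> that unfolding C2_def by blast
    thus ?thesis using that by (simp add: comm_def)
  qed
  thus "\<forall>g\<in>carrier G. \<forall>h\<in>carrier G. \<forall>k\<in>carrier G. g \<otimes> crc h k = crc (crc (g \<otimes> h) (inv\<^bsub>RR \<one>\<^esub> g)) (g \<otimes> k)"
    using id2_pt[OF gr] by blast
qed

lemma bi_iff: "(\<exists>e. bi_skew_brace G (RR e)) \<longleftrightarrow> C2"
proof
  assume "\<exists>e. bi_skew_brace G (RR e)"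
  then obtain e where b: "bi_skew_brace G (RR e)" by blast
  hence gr: "group (RR e)" by (simp add: bi_skew_brace_def skew_brace_def)
  hence e: "e = \<one>" by (rule grpR_one)
  have "\<forall>g\<in>carrier G. \<forall>h\<in>carrier G. \<forall>k\<in>carrier G. g \<otimes> crc h k = crc (crc (g \<otimes> h) (inv\<^bsub>RR \<one>\<^esub> g)) (g \<otimes> k)"
    using b e by (simp add: bi_skew_brace_def skew_brace_def)
  thus C2 using id2_iff gr e by simp
next
  assume c2: C2
  hence gr: "group (RR \<one>)" using C2_C1 C1_grpR by blast
  have "skew_brace G (RR \<one>)" using gr by (simp add: skew_brace_def is_group brace1)
  moreover have "skew_brace (RR \<one>) G" using gr id2_iff[OF gr] c2 by (simp add: skew_brace_def is_group)
  ultimately show "\<exists>e. bi_skew_brace G (RR e)" by (auto simp: bi_skew_brace_def)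
qed

end

theorem theorem1p2:
  fixes G :: "'a monoid" and \<psi> :: "'a \<Rightarrow> 'a"
  assumes "group G" and "\<psi> \<in> hom G G"
  defines "\<nu> \<equiv> \<lambda>g. (\<lambda>h \<in> carrier G. g \<otimes>\<^bsub>G\<^esub> \<psi> g \<otimes>\<^bsub>G\<^esub> h \<otimes>\<^bsub>G\<^esub> inv\<^bsub>G\<^esub> \<psi> g)"
  defines "N \<equiv> \<nu> ` carrier G"
  defines "circ \<equiv> \<lambda>g h. g \<otimes>\<^bsub>G\<^esub> \<psi> g \<otimes>\<^bsub>G\<^esub> h \<otimes>\<^bsub>G\<^esub> inv\<^bsub>G\<^esub> \<psi> g"
  shows
    "((subgroup N (BijGroup (carrier G))
        \<longleftrightarrow> subgroup N (BijGroup (carrier G)) \<and> regular_perm G N \<and> normalises_lreg G N)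
     \<and> (subgroup N (BijGroup (carrier G))
        \<longleftrightarrow> \<psi> ` commutator_subgroup G (\<psi> ` carrier G) (carrier G) \<subseteq> centre G)
     \<and> (subgroup N (BijGroup (carrier G))
        \<longleftrightarrow> (\<exists>e. skew_brace G \<lparr>carrier = carrier G, monoid.mult = circ, monoid.one = e\<rparr>)))
  \<and> ((subgroup N (BijGroup (carrier G)) \<and> regular_perm G N \<and> normalises_lreg G N
        \<and> normalised_by_lreg G N
        \<longleftrightarrow> \<psi> ` derived G (carrier G) \<subseteq> centre G)
     \<and> (\<psi> ` derived G (carrier G) \<subseteq> centre G
        \<longleftrightarrow> (\<exists>e. bi_skew_brace G \<lparr>carrier = carrier G, monoid.mult = circ, monoid.one = e\<rparr>)))"
  proof -
  interpret P: PP G \<psi> using assms(1,2) by (intro PP.intro PP_axioms.intro) auto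
  have nu: "\<nu> = P.nuu" by (simp add: \<nu>_def fun_eq_iff P.nuu_def P.crc_def)
  have N: "N = P.Nset" by (simp add: N_def P.Nset_def nu)
  have c: "circ = P.crc" by (simp add: circ_def fun_eq_iff P.crc_def)
  have R: "\<And>e. \<lparr>carrier = carrier G, monoid.mult = circ, monoid.one = e\<rparr> = P.RR e"
    by (simp add: P.RR_def c)
  have A: "subgroup P.Nset (BijGroup (carrier G)) \<longleftrightarrow> P.C1" by (rule P.sub_iff)
  have B: "subgroup P.Nset (BijGroup (carrier G)) \<and> regular_perm G P.Nset \<and> normalises_lreg G P.Nset
        \<and> normalised_by_lreg G P.Nset \<longleftrightarrow> P.C2"
    using A P.regular P.normalises P.C2_C1 P.C2_nb P.nb_C2 by blast
  show ?thesis unfolding N R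
    using A B P.regular P.normalises P.C1_iff_comm P.skew_iff P.C2_iff_der P.bi_iff by blast
qed

end
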